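(* Let $V\simeq\mathbb{R}^d$ be a $d$-dimensional real vector space with dual $V^*$, let $\mathcal{X}\subseteq V$ span $V$, and let $\mathcal{Y}\subseteq\mathbb{R}$. Let $\mathcal{G}$ be a compact group with normalized Haar measure $\lambda$ admitting a linear representation $\rho:\mathcal{G}\to GL(V)$, acting on $\mathcal{X}$ via $\rho$, with dual representation $\rho^*_g=\rho_{g^{-1}}^{\top}$. Let $\mathcal{P}$ be a distribution on $\mathcal{X}\times\mathcal{Y}$ invariant under this action of $\mathcal{G}$, and suppose $\mathbb{E}[y\mid \mathbf{x}]=\langle\mathbf{w}^*,\mathbf{x}\rangle$ for some unique $\mathbf{w}^*$. Let $\ell(\mathbf{w})=\mathbb{E}_{(\mathbf{x},y)\sim\mathcal{P}}[(\langle\mathbf{w},\mathbf{x}\rangle-y)^2]$. Then the (global) minimizer $\mathbf{w}^*$ of $\ell$ satisfies $\rho^*_g\mathbf{w}^*=\mathbf{w}^*$ for $\lambda$-almost all $g\in\mathcal{G}$. In particular, the function $f(\mathbf{x})=\langle\mathbf{w}^*,\mathbf{x}\rangle$ is $\mathcal{G}$-invariant.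
   Context: $\mathcal{P}$ invariant means $(\rho_g\mathbf{x},y)$ has the same distribution as $(\mathbf{x},y)$ for all $g\in\mathcal{G}$. A function $f$ is $\mathcal{G}$-invariant if $f(\rho_g\mathbf{x})=f(\mathbf{x})$ for all $g$ and $\mathbf{x}$. *)

theory Defs
  imports "HOL-Analysis.Analysis" "HOL-Probability.Probability" "HOL-Algebra.Group"
begin

definition borel_of_top :: "'a topology \<Rightarrow> 'a measure" where
  "borel_of_top T = sigma (topspace T) {U. openin T U}"

definition compact_topological_group :: "('g, 'b) monoid_scheme \<Rightarrow> 'g topology \<Rightarrow> bool" where
  "compact_topological_group G T \<longleftrightarrow>
     group G \<and> topspace T = carrier G \<and> Hausdorff_space T \<and> compact_space T \<and>
     continuous_map (prod_topology T T) T (\<lambda>(g, h). g \<otimes>\<^bsub>G\<^esub> h) \<and>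
     continuous_map T T (\<lambda>g. inv\<^bsub>G\<^esub> g)"

definition normalized_haar :: "('g, 'b) monoid_scheme \<Rightarrow> 'g topology \<Rightarrow> 'g measure \<Rightarrow> bool" where
  "normalized_haar G T lam \<longleftrightarrow>
     prob_space lam \<and> sets lam = sets (borel_of_top T) \<and> space lam = carrier G \<and>
     (\<forall>g\<in>carrier G. \<forall>A\<in>sets lam.
        (\<lambda>h. g \<otimes>\<^bsub>G\<^esub> h) ` A \<in> sets lam \<and>
        emeasure lam ((\<lambda>h. g \<otimes>\<^bsub>G\<^esub> h) ` A) = emeasure lam A)"

definition linear_rep :: "('g, 'b) monoid_scheme \<Rightarrow> ('g \<Rightarrow> 'v::real_vector \<Rightarrow> 'v) \<Rightarrow> bool" where
  "linear_rep G \<rho> \<longleftrightarrow>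
     (\<forall>g\<in>carrier G. linear (\<rho> g) \<and> bij (\<rho> g)) \<and>
     (\<forall>g\<in>carrier G. \<forall>h\<in>carrier G. \<rho> (g \<otimes>\<^bsub>G\<^esub> h) = \<rho> g \<circ> \<rho> h)"

text \<open>Dual representation on V* (linear functionals): rho*_g = (rho_{g^-1})^T, i.e. w \<mapsto> w \<circ> rho_{g^-1}.\<close>
definition dual_rep :: "('g, 'b) monoid_scheme \<Rightarrow> ('g \<Rightarrow> 'v \<Rightarrow> 'v) \<Rightarrow> 'g \<Rightarrow> ('v \<Rightarrow> real) \<Rightarrow> ('v \<Rightarrow> real)" where
  "dual_rep G \<rho> g w = w \<circ> \<rho> (inv\<^bsub>G\<^esub> g)"

definition sq_loss :: "('v \<times> real) measure \<Rightarrow> ('v \<Rightarrow> real) \<Rightarrow> real" where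
  "sq_loss P w = (\<integral>z. (w (fst z) - snd z)\<^sup>2 \<partial>P)"

text \<open>E[y | x] as a function on the sample space (conditioning on the sigma-algebra generated by x).\<close>
definition cond_exp_y_given_x :: "('v::topological_space \<times> real) measure \<Rightarrow> ('v \<times> real \<Rightarrow> real)" where
  "cond_exp_y_given_x P = real_cond_exp P (vimage_algebra (space P) fst borel) snd"

end

theory Submission
  imports Defs
begin
lemma setup1:
  fixes P :: "('v::euclidean_space \<times> real) measure"
  assumes P_prob: "prob_space P" and P_sets: "sets P = sets borel"
  shows "sigma_finite_subalgebra P (vimage_algebra (space P) fst borel)"
proof -
    have "subalgebra P (vimage_algebra (space P) fst borel)"
    unfolding subalgebra_def
  proof
    show "space (vimage_algebra (space P) fst borel) = space P" by simp
    have fm: "fst \<in> measurable P borel" unfolding measurable_cong_sets[OF P_sets refl]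
      by (rule borel_measurable_continuous_onI) (intro continuous_intros)
    then show "sets (vimage_algebra (space P) fst borel) \<subseteq> sets P"
      by (subst sets_vimage_algebra2) (auto intro!: measurable_sets[OF fm])
  qed
  then show ?thesis
    by (intro finite_measure_subalgebra_is_sigma_finite) (simp add: finite_measure_subalgebra_def finite_measure_subalgebra_axioms_def P_prob prob_space.finite_measure)
qed

lemma lin_facts:
  fixes P :: "('v::euclidean_space \<times> real) measure" and w :: "'v \<Rightarrow> real"
  assumes P_prob: "prob_space P" and P_sets: "sets P = sets borel"
    and y_L2: "integrable P (\<lambda>z. (snd z)\<^sup>2)"
    and x_L2: "integrable P (\<lambda>z. (norm (fst z))\<^sup>2)"
    and lin: "linear w"
  shows "(\<lambda>z. w (fst z)) \<in> borel_measurable P"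
    "(\<lambda>z. w (fst z)) \<in> borel_measurable (vimage_algebra (space P) fst borel)"
    "integrable P (\<lambda>z. (w (fst z))\<^sup>2)"
    "integrable P (\<lambda>z. w (fst z) * snd z)"
    "integrable P (\<lambda>z. w (fst z))"
proof -
  interpret prob_space P by fact
  have bl: "bounded_linear w" using lin by (simp add: linear_conv_bounded_linear)
  then obtain K where K: "\<And>x. norm (w x) \<le> norm x * K" "K > 0"
    using bounded_linear.pos_bounded by blast
  have cw: "continuous_on UNIV w" using bl by (simp add: linear_continuous_on)
  have wb: "w \<in> borel_measurable borel" using cw by (rule borel_measurable_continuous_onI)
  have fstm: "fst \<in> measurable P borel" unfolding measurable_cong_sets[OF P_sets refl]
      by (rule borel_measurable_continuous_onI) (intro continuous_intros)
  have sndm: "snd \<in> borel_measurable P" unfolding measurable_cong_sets[OF P_sets refl]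
      by (rule borel_measurable_continuous_onI) (intro continuous_intros)
  show m: "(\<lambda>z. w (fst z)) \<in> borel_measurable P"
    using measurable_comp[OF fstm wb] by (simp add: o_def)
  show "(\<lambda>z. w (fst z)) \<in> borel_measurable (vimage_algebra (space P) fst borel)"
    using measurable_comp[OF measurable_vimage_algebra1[of fst "space P" borel] wb] by (simp add: o_def)
  have i1: "integrable P (\<lambda>z. K\<^sup>2 * (norm (fst z))\<^sup>2 + (snd z)\<^sup>2 + 1)"
    using x_L2 y_L2 by auto
  have b1: "\<bar>w (fst z)\<bar> \<le> K * norm (fst z)" for z using K(1)[of "fst z"] by (simp add: mult.commute)
  show "integrable P (\<lambda>z. (w (fst z))\<^sup>2)"
  proof (rule Bochner_Integration.integrable_bound[OF i1])
    show "(\<lambda>z. (w (fst z))\<^sup>2) \<in> borel_measurable P" using m by measurable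
    show "AE z in P. norm ((w (fst z))\<^sup>2) \<le> norm (K\<^sup>2 * (norm (fst z))\<^sup>2 + (snd z)\<^sup>2 + 1)"
    proof (rule AE_I2)
      fix z :: "'v \<times> real"
      have "\<bar>w (fst z)\<bar>\<^sup>2 \<le> (K * norm (fst z))\<^sup>2"
        by (rule power_mono[OF b1 abs_ge_zero])
      then have h: "(w (fst z))\<^sup>2 \<le> K\<^sup>2 * (norm (fst z))\<^sup>2" by (simp add: power_mult_distrib)
      have "0 \<le> (snd z)\<^sup>2" by simp
      with h have "(w (fst z))\<^sup>2 \<le> K\<^sup>2 * (norm (fst z))\<^sup>2 + (snd z)\<^sup>2 + 1" by linarith
      then show "norm ((w (fst z))\<^sup>2) \<le> norm (K\<^sup>2 * (norm (fst z))\<^sup>2 + (snd z)\<^sup>2 + 1)"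
        by simp
    qed
  qed
  show "integrable P (\<lambda>z. w (fst z) * snd z)"
  proof (rule Bochner_Integration.integrable_bound[OF i1])
    show "(\<lambda>z. w (fst z) * snd z) \<in> borel_measurable P" using m sndm by measurable
    show "AE z in P. norm (w (fst z) * snd z) \<le> norm (K\<^sup>2 * (norm (fst z))\<^sup>2 + (snd z)\<^sup>2 + 1)"
    proof (rule AE_I2)
      fix z :: "'v \<times> real"
      have "\<bar>w (fst z) * snd z\<bar> \<le> K * norm (fst z) * \<bar>snd z\<bar>" using b1[of z]
        by (simp add: abs_mult mult_right_mono)
      also have "\<dots> \<le> K\<^sup>2 * (norm (fst z))\<^sup>2 + (snd z)\<^sup>2 + 1"
      proof -
        define a where "a = K * norm (fst z)"
        define b where "b = \<bar>snd z\<bar>"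
        have a0: "0 \<le> a" using K(2) unfolding a_def by simp
        have b0: "0 \<le> b" unfolding b_def by simp
        have "0 \<le> (a - b)\<^sup>2" by simp
        then have "2 * (a * b) \<le> a\<^sup>2 + b\<^sup>2" by (simp add: power2_diff)
        moreover have "0 \<le> a * b" using a0 b0 by simp
        moreover have "a\<^sup>2 = K\<^sup>2 * (norm (fst z))\<^sup>2" unfolding a_def by (simp add: power_mult_distrib)
        moreover have "b\<^sup>2 = (snd z)\<^sup>2" unfolding b_def by simp
        ultimately show ?thesis unfolding a_def b_def by linarith
      qed
      finally show "norm (w (fst z) * snd z) \<le> norm (K\<^sup>2 * (norm (fst z))\<^sup>2 + (snd z)\<^sup>2 + 1)"
        by simp
    qed
  qed
  show "integrable P (\<lambda>z. w (fst z))"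
  proof (rule Bochner_Integration.integrable_bound[OF i1 m])
    show "AE z in P. norm (w (fst z)) \<le> norm (K\<^sup>2 * (norm (fst z))\<^sup>2 + (snd z)\<^sup>2 + 1)"
    proof (rule AE_I2)
      fix z :: "'v \<times> real"
      have "\<bar>w (fst z)\<bar> \<le> K * norm (fst z)" by (rule b1)
      also have "\<dots> \<le> K\<^sup>2 * (norm (fst z))\<^sup>2 + (snd z)\<^sup>2 + 1"
      proof -
        define a where "a = K * norm (fst z)"
        have "0 \<le> (a - 1)\<^sup>2" by simp
        then have "2 * a \<le> a\<^sup>2 + 1" by (simp add: power2_diff)
        moreover have "0 \<le> a" using K(2) unfolding a_def by simp
        moreover have "a\<^sup>2 = K\<^sup>2 * (norm (fst z))\<^sup>2" unfolding a_def by (simp add: power_mult_distrib)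
        moreover have "0 \<le> (snd z)\<^sup>2" by simp
        ultimately show ?thesis unfolding a_def by linarith
      qed
      finally show "norm (w (fst z)) \<le> norm (K\<^sup>2 * (norm (fst z))\<^sup>2 + (snd z)\<^sup>2 + 1)"
        by simp
    qed
  qed
qed



lemma sq_int:
  fixes P :: "('v::euclidean_space \<times> real) measure" and w :: "'v \<Rightarrow> real"
  assumes P_prob: "prob_space P" and P_sets: "sets P = sets borel"
    and y_L2: "integrable P (\<lambda>z. (snd z)\<^sup>2)"
    and x_L2: "integrable P (\<lambda>z. (norm (fst z))\<^sup>2)"
    and lin: "linear w"
  shows "integrable P (\<lambda>z. (w (fst z) - snd z)\<^sup>2)"
proof -
  note L = lin_facts[OF assms]
  have "integrable P (\<lambda>z. (w (fst z))\<^sup>2 - 2 * (w (fst z) * snd z) + (snd z)\<^sup>2)"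
    using L y_L2 by auto
  moreover have "(\<lambda>z. (w (fst z))\<^sup>2 - 2 * (w (fst z) * snd z) + (snd z)\<^sup>2) = (\<lambda>z. (w (fst z) - snd z)\<^sup>2)"
    by (rule ext) (simp add: power2_diff)
  ultimately show ?thesis by simp
qed

lemma prod_int:
  fixes f g :: "'a \<Rightarrow> real"
  assumes "integrable M (\<lambda>z. (f z)\<^sup>2)" "integrable M (\<lambda>z. (g z)\<^sup>2)"
    "f \<in> borel_measurable M" "g \<in> borel_measurable M"
  shows "integrable M (\<lambda>z. f z * g z)"
proof -
  have i: "integrable M (\<lambda>z. (f z)\<^sup>2 + (g z)\<^sup>2)" using assms by auto
  show ?thesis
  proof (rule Bochner_Integration.integrable_bound[OF i])
  show "(\<lambda>z. f z * g z) \<in> borel_measurable M" using assms by measurable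
  show "AE z in M. norm (f z * g z) \<le> norm ((f z)\<^sup>2 + (g z)\<^sup>2)"
  proof (rule AE_I2)
    fix z
    have "0 \<le> (\<bar>f z\<bar> - \<bar>g z\<bar>)\<^sup>2" by simp
    then have h: "2 * (\<bar>f z\<bar> * \<bar>g z\<bar>) \<le> (f z)\<^sup>2 + (g z)\<^sup>2"
      by (simp add: power2_diff)
    have h0: "0 \<le> \<bar>f z\<bar> * \<bar>g z\<bar>" by simp
    have "\<bar>f z * g z\<bar> \<le> (f z)\<^sup>2 + (g z)\<^sup>2"
      unfolding abs_mult using h h0 by linarith
    then show "norm (f z * g z) \<le> norm ((f z)\<^sup>2 + (g z)\<^sup>2)" by simp
  qed
  qed
qed

theorem proposition3p3:
  fixes G :: "('g, 'b) monoid_scheme" and T :: "'g topology" and lam :: "'g measure"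
    and \<rho> :: "'g \<Rightarrow> 'v::euclidean_space \<Rightarrow> 'v"
    and X :: "'v set" and Y :: "real set"
    and P :: "('v \<times> real) measure" and wstar :: "'v \<Rightarrow> real"
  assumes grp: "compact_topological_group G T"
    and haar: "normalized_haar G T lam"
    and rep: "linear_rep G \<rho>"
    and X_span: "span X = UNIV"
    and X_act: "\<forall>g\<in>carrier G. \<rho> g ` X \<subseteq> X"
    and P_prob: "prob_space P" and P_sets: "sets P = sets borel"
    and P_supp: "AE z in P. fst z \<in> X \<and> snd z \<in> Y"
    and P_inv: "\<forall>g\<in>carrier G. distr P borel (\<lambda>(x, y). (\<rho> g x, y)) = P"
    and y_L2: "integrable P (\<lambda>z. (snd z)\<^sup>2)"
    and x_L2: "integrable P (\<lambda>z. (norm (fst z))\<^sup>2)"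
    and wstar_lin: "linear wstar"
    and wstar_ce: "AE z in P. cond_exp_y_given_x P z = wstar (fst z)"
    and wstar_unique: "\<forall>w. linear w \<and> (AE z in P. cond_exp_y_given_x P z = w (fst z)) \<longrightarrow> w = wstar"
  shows "(\<forall>w. linear w \<longrightarrow> sq_loss P wstar \<le> sq_loss P w)
       \<and> (AE g in lam. dual_rep G \<rho> g wstar = wstar)
       \<and> (\<forall>g\<in>carrier G. \<forall>x\<in>X. wstar (\<rho> g x) = wstar x)"
proof -
  define F where "F = vimage_algebra (space P) fst borel"
  have sf: "sigma_finite_subalgebra P F" unfolding F_def by (rule setup1[OF P_prob P_sets])
  interpret prob_space P by fact
  have sndm: "snd \<in> borel_measurable P" unfolding measurable_cong_sets[OF P_sets refl]
      by (rule borel_measurable_continuous_onI) (intro continuous_intros)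
  note LS = lin_facts[OF P_prob P_sets y_L2 x_L2 wstar_lin, folded F_def]
  have ce_def: "cond_exp_y_given_x P = real_cond_exp P F snd"
    unfolding cond_exp_y_given_x_def F_def ..
  have key: "sq_loss P w = sq_loss P wstar + (\<integral>z. (w (fst z) - wstar (fst z))\<^sup>2 \<partial>P)"
    if lw: "linear w" for w
  proof -
    define w' where "w' = (\<lambda>x. w x - wstar x)"
    have lw': "linear w'" unfolding w'_def
      by (rule linearI) (simp_all add: linear_add[OF lw] linear_add[OF wstar_lin]
          linear_scale[OF lw] linear_scale[OF wstar_lin] algebra_simps)
    note L = lin_facts[OF P_prob P_sets y_L2 x_L2 lw', folded F_def]
    have ie2: "integrable P (\<lambda>z. (wstar (fst z) - snd z)\<^sup>2)"
      by (rule sq_int[OF P_prob P_sets y_L2 x_L2 wstar_lin])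
    have em: "(\<lambda>z. wstar (fst z) - snd z) \<in> borel_measurable P" using LS(1) sndm by measurable
    have ipd: "integrable P (\<lambda>z. w' (fst z) * (wstar (fst z) - snd z))"
      by (rule prod_int[OF L(3) ie2 L(1) em])
    have ipw: "integrable P (\<lambda>z. w' (fst z) * wstar (fst z))"
      by (rule prod_int[OF L(3) LS(3) L(1) LS(1)])
    have ce1: "(\<integral>z. w' (fst z) * real_cond_exp P F snd z \<partial>P) = (\<integral>z. w' (fst z) * snd z \<partial>P)"
      by (rule sigma_finite_subalgebra.real_cond_exp_intg(2)[OF sf L(4) L(2) sndm])
    have ce2: "(\<integral>z. w' (fst z) * real_cond_exp P F snd z \<partial>P) = (\<integral>z. w' (fst z) * wstar (fst z) \<partial>P)"
    proof (rule integral_cong_AE)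
      show "(\<lambda>z. w' (fst z) * real_cond_exp P F snd z) \<in> borel_measurable P"
        using L(1) borel_measurable_cond_exp2 by measurable
      show "(\<lambda>z. w' (fst z) * wstar (fst z)) \<in> borel_measurable P"
        using L(1) LS(1) by measurable
      show "AE z in P. w' (fst z) * real_cond_exp P F snd z = w' (fst z) * wstar (fst z)"
        using wstar_ce unfolding ce_def by eventually_elim simp
    qed
    have cross: "(\<integral>z. w' (fst z) * (wstar (fst z) - snd z) \<partial>P) = 0"
    proof -
      have "(\<integral>z. w' (fst z) * (wstar (fst z) - snd z) \<partial>P)
          = (\<integral>z. w' (fst z) * wstar (fst z) - w' (fst z) * snd z \<partial>P)"
        by (simp add: right_diff_distrib)
      also have "\<dots> = (\<integral>z. w' (fst z) * wstar (fst z) \<partial>P) - (\<integral>z. w' (fst z) * snd z \<partial>P)"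
        by (rule Bochner_Integration.integral_diff[OF ipw L(4)])
      also have "\<dots> = 0" using ce1 ce2 by simp
      finally show ?thesis .
    qed
    have eq: "(\<lambda>z. (w (fst z) - snd z)\<^sup>2) = (\<lambda>z. ((w' (fst z))\<^sup>2 + 2 * (w' (fst z) * (wstar (fst z) - snd z))) + (wstar (fst z) - snd z)\<^sup>2)"
      by (rule ext) (simp add: w'_def power2_eq_square algebra_simps)
    have "sq_loss P w = (\<integral>z. ((w' (fst z))\<^sup>2 + 2 * (w' (fst z) * (wstar (fst z) - snd z))) + (wstar (fst z) - snd z)\<^sup>2 \<partial>P)"
      unfolding sq_loss_def eq ..
    also have "\<dots> = (\<integral>z. (w' (fst z))\<^sup>2 + 2 * (w' (fst z) * (wstar (fst z) - snd z)) \<partial>P) + (\<integral>z. (wstar (fst z) - snd z)\<^sup>2 \<partial>P)"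
      by (rule Bochner_Integration.integral_add) (use L(3) ipd ie2 in auto)
    also have "(\<integral>z. (w' (fst z))\<^sup>2 + 2 * (w' (fst z) * (wstar (fst z) - snd z)) \<partial>P)
        = (\<integral>z. (w' (fst z))\<^sup>2 \<partial>P) + (\<integral>z. 2 * (w' (fst z) * (wstar (fst z) - snd z)) \<partial>P)"
      by (rule Bochner_Integration.integral_add) (use L(3) ipd in auto)
    also have "(\<integral>z. 2 * (w' (fst z) * (wstar (fst z) - snd z)) \<partial>P) = 0"
      using cross by simp
    finally show ?thesis unfolding sq_loss_def w'_def by simp
  qed
  have nonneg: "0 \<le> (\<integral>z. (w (fst z) - wstar (fst z))\<^sup>2 \<partial>P)" for w :: "'v \<Rightarrow> real"
    by (rule integral_nonneg_AE) simp
  have part1: "\<forall>w. linear w \<longrightarrow> sq_loss P wstar \<le> sq_loss P w"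
  proof (intro allI impI)
    fix w :: "'v \<Rightarrow> real" assume "linear w"
    show "sq_loss P wstar \<le> sq_loss P w" using key[OF \<open>linear w\<close>] nonneg[of w] by linarith
  qed
  have inv: "wstar \<circ> \<rho> g = wstar" if g: "g \<in> carrier G" for g
  proof -
    have lr: "linear (\<rho> g)" using rep g unfolding linear_rep_def by blast
    have lw: "linear (wstar \<circ> \<rho> g)" by (rule linear_compose[OF lr wstar_lin])
    have cr: "continuous_on UNIV (\<rho> g)" using lr
      by (simp add: linear_continuous_on linear_conv_bounded_linear)
    define phi where "phi = (\<lambda>(x::'v, y::real). (\<rho> g x, y))"
    have phim: "phi \<in> measurable P borel"
    proof -
      have "continuous_on UNIV phi" unfolding phi_def split_beta
        by (intro continuous_intros continuous_on_compose2[OF cr]) auto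
      then have "phi \<in> borel_measurable borel" by (rule borel_measurable_continuous_onI)
      then show ?thesis unfolding measurable_cong_sets[OF P_sets refl] .
    qed
    have fm: "(\<lambda>z. (wstar (fst z) - snd z)\<^sup>2) \<in> borel_measurable borel"
      using LS(1) sndm unfolding measurable_cong_sets[OF P_sets refl] by measurable
    have "sq_loss P wstar = (\<integral>z. (wstar (fst z) - snd z)\<^sup>2 \<partial>(distr P borel phi))"
      using P_inv g unfolding sq_loss_def phi_def by simp
    also have "\<dots> = (\<integral>z. (wstar (fst (phi z)) - snd (phi z))\<^sup>2 \<partial>P)"
      by (rule integral_distr[OF phim fm])
    also have "\<dots> = sq_loss P (wstar \<circ> \<rho> g)"
      unfolding sq_loss_def phi_def by (simp add: split_beta)
    finally have "sq_loss P (wstar \<circ> \<rho> g) = sq_loss P wstar" by simp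
    with key[OF lw] have z: "(\<integral>z. ((wstar \<circ> \<rho> g) (fst z) - wstar (fst z))\<^sup>2 \<partial>P) = 0" by simp
    define w' where "w' = (\<lambda>x. (wstar \<circ> \<rho> g) x - wstar x)"
    have lw': "linear w'" unfolding w'_def
      by (rule linearI) (simp_all add: linear_add[OF lw] linear_add[OF wstar_lin]
          linear_scale[OF lw] linear_add[OF lr] linear_scale[OF lr] linear_scale[OF wstar_lin] algebra_simps)
    note L = lin_facts[OF P_prob P_sets y_L2 x_L2 lw']
    have "AE z in P. (w' (fst z))\<^sup>2 = 0"
      using integral_nonneg_eq_0_iff_AE[OF L(3)] z unfolding w'_def by simp
    then have "AE z in P. cond_exp_y_given_x P z = (wstar \<circ> \<rho> g) (fst z)"
      using wstar_ce by eventually_elim (simp add: w'_def)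
    then show ?thesis using wstar_unique lw by blast
  qed
  have gr: "group G" using grp unfolding compact_topological_group_def by blast
  have part2: "AE g in lam. dual_rep G \<rho> g wstar = wstar"
  proof (rule AE_I2)
    fix g assume "g \<in> space lam"
    then have "g \<in> carrier G" using haar unfolding normalized_haar_def by blast
    then have "inv\<^bsub>G\<^esub> g \<in> carrier G" using group.inv_closed[OF gr] by blast
    then show "dual_rep G \<rho> g wstar = wstar" unfolding dual_rep_def using inv by blast
  qed
  have part3: "\<forall>g\<in>carrier G. \<forall>x\<in>X. wstar (\<rho> g x) = wstar x"
  proof (intro ballI)
    fix g x assume g: "g \<in> carrier G" and "x \<in> X"
    show "wstar (\<rho> g x) = wstar x" using fun_cong[OF inv[OF g], of x] by simp
  qed
  show ?thesis using part1 part2 part3 by blast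
qed

end
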